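(* In the setting where $X_1,\dots,X_n$ are i.i.d. from $p\in\Delta([k])$, $b_1,\dots,b_n$ are the $\varepsilon$-RAPPOR outputs, $N_x=\sum_{j=1}^n\mathbf 1\{b_{jx}=1\}$, $\lambda=\alpha_R/k+\beta_R$ and $T=\sum_{x\in[k]}\big((N_x-(n-1)\lambda)^2-N_x\big)+k(n-1)\lambda^2$, we have $$\mathrm{Var}[T]\le 4kn^2+8n^3\alpha_R^2\|p-u\|_2^2.$$
   Context: $\Delta([k])$ is the set of probability distributions on $[k]=\{1,\dots,k\}$, $u$ the uniform distribution on $[k]$. The $\varepsilon$-RAPPOR mechanism ($\varepsilon>0$) maps $x\in[k]$ to a random vector $b\in\{0,1\}^k$ obtained from the one-hot vector $e_x$ by flipping each coordinate independently with probability $\beta_R=1/(e^{\varepsilon/2}+1)$; the mechanism is applied independently for each user. Set $\alpha_R=(e^{\varepsilon/2}-1)/(e^{\varepsilon/2}+1)$. *)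

theory Defs
  imports "HOL-Probability.Probability"
begin

text \<open>Users are indexed by 1..n, categories (the domain [k]) by 1..k.
A distribution p on [k] is a pmf on nat with support contained in {1..k}.\<close>

definition beta_R :: "real \<Rightarrow> real" where
  "beta_R \<epsilon> = 1 / (exp (\<epsilon> / 2) + 1)"

definition alpha_R :: "real \<Rightarrow> real" where
  "alpha_R \<epsilon> = (exp (\<epsilon> / 2) - 1) / (exp (\<epsilon> / 2) + 1)"

text \<open>epsilon-RAPPOR on input x: the one-hot vector e_x in {0,1}^k (true = 1),
each coordinate flipped independently with probability beta_R.\<close>
definition rappor :: "real \<Rightarrow> nat \<Rightarrow> nat \<Rightarrow> (nat \<Rightarrow> bool) pmf" where
  "rappor \<epsilon> k x =
     Pi_pmf {1..k} False (\<lambda>y. map_pmf (\<lambda>flip. (y = x) \<noteq> flip) (bernoulli_pmf (beta_R \<epsilon>)))"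

text \<open>Joint distribution of the outputs b_1..b_n: each user j draws X_j from p
independently and applies RAPPOR independently; b j y is the y-th bit of b_j.\<close>
definition rappor_outputs :: "real \<Rightarrow> nat \<Rightarrow> nat \<Rightarrow> nat pmf \<Rightarrow> (nat \<Rightarrow> nat \<Rightarrow> bool) pmf" where
  "rappor_outputs \<epsilon> k n p = Pi_pmf {1..n} (\<lambda>_. False) (\<lambda>j. bind_pmf p (rappor \<epsilon> k))"

definition N_count :: "nat \<Rightarrow> (nat \<Rightarrow> nat \<Rightarrow> bool) \<Rightarrow> nat \<Rightarrow> real" where
  "N_count n b x = real (card {j \<in> {1..n}. b j x})"

definition lam_R :: "real \<Rightarrow> nat \<Rightarrow> real" where
  "lam_R \<epsilon> k = alpha_R \<epsilon> / real k + beta_R \<epsilon>"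

definition T_stat :: "real \<Rightarrow> nat \<Rightarrow> nat \<Rightarrow> (nat \<Rightarrow> nat \<Rightarrow> bool) \<Rightarrow> real" where
  "T_stat \<epsilon> k n b =
     (\<Sum>x\<in>{1..k}. (N_count n b x - (real n - 1) * lam_R \<epsilon> k)^2 - N_count n b x)
     + real k * (real n - 1) * (lam_R \<epsilon> k)^2"

end

theory Submission
  imports Defs
begin

lemma fin_Pi:
  assumes "finite A" "\<And>i. i \<in> A \<Longrightarrow> finite (set_pmf (P i))"
  shows "finite (set_pmf (Pi_pmf A d P))"
  using assms by (subst set_Pi_pmf) (auto intro!: finite_PiE_dflt)

lemma pair_mult:
  fixes f :: "'a \<Rightarrow> real" and g :: "'b \<Rightarrow> real"
  assumes "finite (set_pmf P)" "finite (set_pmf Q)"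
  shows "measure_pmf.expectation (pair_pmf P Q) (\<lambda>z. f (fst z) * g (snd z))
       = measure_pmf.expectation P f * measure_pmf.expectation Q g"
proof -
  have "measure_pmf.expectation (pair_pmf P Q) (\<lambda>z. f (fst z) * g (snd z))
     = (\<Sum>z\<in>set_pmf P \<times> set_pmf Q. pmf (pair_pmf P Q) z *\<^sub>R (f (fst z) * g (snd z)))"
    using assms by (intro integral_measure_pmf) auto
  also have "\<dots> = (\<Sum>a\<in>set_pmf P. \<Sum>b\<in>set_pmf Q. (pmf P a * f a) * (pmf Q b * g b))"
    unfolding sum.cartesian_product by (intro sum.cong) (auto simp: pmf_pair)
  also have "\<dots> = (\<Sum>a\<in>set_pmf P. pmf P a * f a) * (\<Sum>b\<in>set_pmf Q. pmf Q b * g b)"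
    by (simp add: sum_product)
  also have "(\<Sum>a\<in>set_pmf P. pmf P a * f a) = measure_pmf.expectation P f"
    using assms by (subst integral_measure_pmf[of "set_pmf P"]) auto
  also have "(\<Sum>b\<in>set_pmf Q. pmf Q b * g b) = measure_pmf.expectation Q g"
    using assms by (subst integral_measure_pmf[of "set_pmf Q"]) auto
  finally show ?thesis .
qed

lemma Pi_indep:
  fixes f :: "'b \<Rightarrow> real" and F :: "('a \<Rightarrow> 'b) \<Rightarrow> real"
  assumes fin: "finite A" "\<And>i. i \<in> A \<Longrightarrow> finite (set_pmf (P i))" and a: "a \<in> A"
    and F: "\<And>b c. F (b(a:=c)) = F b"
  shows "measure_pmf.expectation (Pi_pmf A d P) (\<lambda>b. f (b a) * F b)
       = measure_pmf.expectation (P a) f * measure_pmf.expectation (Pi_pmf A d P) F"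
proof -
  have PI: "Pi_pmf A d P = map_pmf (\<lambda>(y,g). g(a:=y)) (pair_pmf (P a) (Pi_pmf (A - {a}) d P))"
  proof -
    have "Pi_pmf A d P = Pi_pmf (insert a (A - {a})) d P" using a by (simp add: insert_absorb)
    also have "\<dots> = map_pmf (\<lambda>(y,g). g(a:=y)) (pair_pmf (P a) (Pi_pmf (A - {a}) d P))"
      using fin by (intro Pi_pmf_insert) auto
    finally show ?thesis .
  qed
  have fin': "finite (set_pmf (Pi_pmf (A - {a}) d P))" using fin by (intro fin_Pi) auto
  have "measure_pmf.expectation (Pi_pmf A d P) (\<lambda>b. f (b a) * F b)
      = measure_pmf.expectation (pair_pmf (P a) (Pi_pmf (A - {a}) d P)) (\<lambda>z. f (fst z) * F (snd z))"
    unfolding PI by (simp add: case_prod_unfold F)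
  also have "\<dots> = measure_pmf.expectation (P a) f * measure_pmf.expectation (Pi_pmf (A - {a}) d P) F"
    using fin' fin a by (intro pair_mult) auto
  also have "measure_pmf.expectation (Pi_pmf (A - {a}) d P) F = measure_pmf.expectation (Pi_pmf A d P) F"
    unfolding PI by (simp add: case_prod_unfold F)
  finally show ?thesis .
qed

context
  fixes D :: "'b pmf" and I :: "'a set" and dflt :: 'b and Z :: "'b \<Rightarrow> 'c \<Rightarrow> real"
  assumes finI: "finite I" and finD: "finite (set_pmf D)"
    and Z0: "\<And>x. measure_pmf.expectation D (\<lambda>u. Z u x) = 0"
begin

definition Pm where "Pm = Pi_pmf I dflt (\<lambda>_. D)"

lemma finPm: "finite (set_pmf Pm)"
  unfolding Pm_def using finI finD by (intro fin_Pi) auto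

lemma intPm[simp]: "integrable (measure_pmf Pm) (f :: _ \<Rightarrow> real)"
  by (rule integrable_measure_pmf_finite[OF finPm])

lemma indep:
  fixes f :: "'b \<Rightarrow> real" and F :: "('a \<Rightarrow> 'b) \<Rightarrow> real"
  assumes "i \<in> I" "\<And>b c. F (b(i:=c)) = F b"
  shows "measure_pmf.expectation Pm (\<lambda>b. f (b i) * F b)
       = measure_pmf.expectation D f * measure_pmf.expectation Pm F"
  unfolding Pm_def using assms finI finD by (intro Pi_indep) auto

lemma E1:
  fixes f :: "'b \<Rightarrow> real"
  assumes "i \<in> I"
  shows "measure_pmf.expectation Pm (\<lambda>b. f (b i)) = measure_pmf.expectation D f"
  using indep[OF assms, of "\<lambda>_. 1" f] by simp

definition Cm where "Cm x y = measure_pmf.expectation D (\<lambda>u. Z u x * Z u y)"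

lemma M1: "i \<in> I \<Longrightarrow> measure_pmf.expectation Pm (\<lambda>b. Z (b i) x) = 0"
  using E1[of i "\<lambda>u. Z u x"] Z0 by simp

lemma M2:
  assumes "i \<in> I" "j \<in> I"
  shows "measure_pmf.expectation Pm (\<lambda>b. Z (b i) x * Z (b j) y) = (if i = j then Cm x y else 0)"
proof (cases "i = j")
  case True
  then show ?thesis using E1[OF assms(1), of "\<lambda>u. Z u x * Z u y"] by (simp add: Cm_def)
next
  case False
  then show ?thesis using indep[OF assms(1), of "\<lambda>b. Z (b j) y" "\<lambda>u. Z u x"] Z0 by simp
qed

lemma M3:
  assumes "i \<in> I" "j \<in> I" "l \<in> I" "j \<noteq> l"
  shows "measure_pmf.expectation Pm (\<lambda>b. Z (b i) y * (Z (b j) x * Z (b l) x)) = 0"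
proof -
  consider "i \<noteq> j" "i \<noteq> l" | "i = j" | "i = l" by blast
  then show ?thesis
  proof cases
    case 1
    then show ?thesis using indep[OF assms(1), of "\<lambda>b. Z (b j) x * Z (b l) x" "\<lambda>u. Z u y"] Z0 by simp
  next
    case 2
    have "(\<lambda>b. Z (b i) y * (Z (b j) x * Z (b l) x)) = (\<lambda>b. Z (b l) x * (Z (b i) y * Z (b i) x))"
      using 2 by (auto simp: fun_eq_iff)
    then show ?thesis using 2 assms indep[OF assms(3), of "\<lambda>b. Z (b i) y * Z (b i) x" "\<lambda>u. Z u x"] Z0 by simp
  next
    case 3
    have "(\<lambda>b. Z (b i) y * (Z (b j) x * Z (b l) x)) = (\<lambda>b. Z (b j) x * (Z (b i) y * Z (b i) x))"
      using 3 by (auto simp: fun_eq_iff)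
    then show ?thesis using 3 assms indep[OF assms(2), of "\<lambda>b. Z (b i) y * Z (b i) x" "\<lambda>u. Z u x"] Z0 by simp
  qed
qed

lemma M4:
  assumes "i \<in> I" "j \<in> I" "k \<in> I" "l \<in> I" "i \<noteq> j" "k \<noteq> l"
  shows "measure_pmf.expectation Pm (\<lambda>b. (Z (b i) x * Z (b j) x) * (Z (b k) y * Z (b l) y))
       = (if (k = i \<and> l = j) \<or> (k = j \<and> l = i) then (Cm x y)^2 else 0)"
proof -
  consider "i \<noteq> k" "i \<noteq> l" | "j \<noteq> k" "j \<noteq> l" | "(k = i \<and> l = j) \<or> (k = j \<and> l = i)"
    using assms by blast
  then show ?thesis
  proof cases
    case 1
    have "(\<lambda>b. (Z (b i) x * Z (b j) x) * (Z (b k) y * Z (b l) y))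
        = (\<lambda>b. Z (b i) x * (Z (b j) x * (Z (b k) y * Z (b l) y)))"
      by (auto simp: fun_eq_iff)
    then show ?thesis using 1 assms
        indep[OF assms(1), of "\<lambda>b. Z (b j) x * (Z (b k) y * Z (b l) y)" "\<lambda>u. Z u x"] Z0 by auto
  next
    case 2
    have "(\<lambda>b. (Z (b i) x * Z (b j) x) * (Z (b k) y * Z (b l) y))
        = (\<lambda>b. Z (b j) x * (Z (b i) x * (Z (b k) y * Z (b l) y)))"
      by (auto simp: fun_eq_iff)
    then show ?thesis using 2 assms
        indep[OF assms(2), of "\<lambda>b. Z (b i) x * (Z (b k) y * Z (b l) y)" "\<lambda>u. Z u x"] Z0 by auto
  next
    case 3
    have "(\<lambda>b. (Z (b i) x * Z (b j) x) * (Z (b k) y * Z (b l) y))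
        = (\<lambda>b. (Z (b j) x * Z (b j) y) * (Z (b i) x * Z (b i) y))"
      using 3 by (auto simp: fun_eq_iff)
    moreover have "measure_pmf.expectation Pm (\<lambda>b. (Z (b j) x * Z (b j) y) * (Z (b i) x * Z (b i) y))
       = Cm x y * Cm x y"
      using indep[OF assms(2), of "\<lambda>b. Z (b i) x * Z (b i) y" "\<lambda>u. Z u x * Z u y"]
        E1[OF assms(1), of "\<lambda>u. Z u x * Z u y"] assms by (simp add: Cm_def)
    ultimately show ?thesis using 3 by (simp add: power2_eq_square)
  qed
qed

lemma Esum: "measure_pmf.expectation Pm (\<lambda>b. \<Sum>i\<in>S. (f :: _ \<Rightarrow> _ \<Rightarrow> real) i b) = (\<Sum>i\<in>S. measure_pmf.expectation Pm (f i))"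
  by (rule Bochner_Integration.integral_sum) simp

lemma Eadd: "measure_pmf.expectation Pm (\<lambda>b. (f :: _ \<Rightarrow> real) b + g b) = measure_pmf.expectation Pm f + measure_pmf.expectation Pm g"
  by (rule Bochner_Integration.integral_add) simp_all

lemma count2:
  fixes g :: "'c \<Rightarrow> real"
  assumes "i \<in> I" "j \<in> I" "i \<noteq> j"
  shows "(\<Sum>k\<in>I. \<Sum>l\<in>I-{k}. \<Sum>y\<in>K. if (k = i \<and> l = j) \<or> (k = j \<and> l = i) then g y else 0)
       = 2 * (\<Sum>y\<in>K. g y)"
proof -
  define S where "S = (\<Sum>y\<in>K. g y)"
  have 1: "(\<Sum>y\<in>K. if P then g y else 0) = (if P then S else 0)" for P
    by (cases P) (simp_all add: S_def)
  have 2: "(\<Sum>l\<in>I-{k}. if (k = i \<and> l = j) \<or> (k = j \<and> l = i) then S else 0)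
        = (if k = i then S else 0) + (if k = j then S else 0)" for k
  proof (cases "k = i")
    case True
    then show ?thesis using assms finI by (simp add: sum.delta)
  next
    case False
    then show ?thesis using assms finI by (cases "k = j") (simp_all add: sum.delta)
  qed
  show ?thesis
    unfolding 1 2 using assms finI by (simp add: sum.distrib sum.delta S_def)
qed

context
  fixes K :: "'c set" and \<mu> :: "'c \<Rightarrow> real"
  assumes finK: "finite K"
begin

definition Aq where "Aq b = (\<Sum>i\<in>I. \<Sum>x\<in>K. \<mu> x * Z (b i) x)"
definition Qq where "Qq b = (\<Sum>i\<in>I. \<Sum>j\<in>I-{i}. \<Sum>x\<in>K. Z (b i) x * Z (b j) x)"
definition W where "W = (\<Sum>x\<in>K. \<Sum>y\<in>K. \<mu> x * \<mu> y * Cm x y)"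
definition V where "V = (\<Sum>x\<in>K. \<Sum>y\<in>K. (Cm x y)^2)"

lemma EA: "measure_pmf.expectation Pm Aq = 0"
proof -
  have "measure_pmf.expectation Pm Aq = (\<Sum>i\<in>I. \<Sum>x\<in>K. \<mu> x * measure_pmf.expectation Pm (\<lambda>b. Z (b i) x))"
    unfolding Aq_def by (simp add: Esum)
  also have "\<dots> = 0" by (intro sum.neutral ballI) (simp add: M1)
  finally show ?thesis .
qed

lemma EQ: "measure_pmf.expectation Pm Qq = 0"
proof -
  have "measure_pmf.expectation Pm Qq = (\<Sum>i\<in>I. \<Sum>j\<in>I-{i}. \<Sum>x\<in>K. measure_pmf.expectation Pm (\<lambda>b. Z (b i) x * Z (b j) x))"
    unfolding Qq_def by (simp add: Esum)
  also have "\<dots> = 0" by (intro sum.neutral ballI) (auto simp: M2)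
  finally show ?thesis .
qed

lemma cI: "i \<in> I \<Longrightarrow> real (card (I - {i})) = real (card I) - 1"
proof -
  assume i: "i \<in> I"
  then have "card I \<ge> 1" using finI by (metis One_nat_def Suc_leI card_gt_0_iff empty_iff)
  then show ?thesis using i finI by (simp add: card_Diff_singleton of_nat_diff)
qed

lemma Emult2: "measure_pmf.expectation Pm (\<lambda>b. ((a::real) * f b) * (c * g b)) = a * c * measure_pmf.expectation Pm (\<lambda>b. f b * g b)"
proof -
  have "(\<lambda>b. (a * f b) * (c * g b)) = (\<lambda>b. (a * c) * (f b * g b))" by (auto simp: fun_eq_iff mult_ac)
  then show ?thesis by simp
qed

lemma Emult1: "measure_pmf.expectation Pm (\<lambda>b. ((a::real) * f b) * g b) = a * measure_pmf.expectation Pm (\<lambda>b. f b * g b)"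
proof -
  have "(\<lambda>b. (a * f b) * g b) = (\<lambda>b. a * (f b * g b))" by (auto simp: fun_eq_iff mult_ac)
  then show ?thesis by simp
qed

lemma EAA: "measure_pmf.expectation Pm (\<lambda>b. Aq b * Aq b) = real (card I) * W"
proof -
  have eq: "(\<lambda>b. Aq b * Aq b) = (\<lambda>b. \<Sum>i\<in>I. \<Sum>x\<in>K. \<Sum>j\<in>I. \<Sum>y\<in>K. (\<mu> x * Z (b i) x) * (\<mu> y * Z (b j) y))"
  proof
    fix b
    have "Aq b * Aq b = (\<Sum>i\<in>I. \<Sum>x\<in>K. (\<mu> x * Z (b i) x) * Aq b)"
      by (subst (1) Aq_def) (simp add: sum_distrib_right)
    also have "\<dots> = (\<Sum>i\<in>I. \<Sum>x\<in>K. \<Sum>j\<in>I. \<Sum>y\<in>K. (\<mu> x * Z (b i) x) * (\<mu> y * Z (b j) y))"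
      by (simp add: Aq_def sum_distrib_left)
    finally show "Aq b * Aq b = \<dots>" .
  qed
  have "measure_pmf.expectation Pm (\<lambda>b. Aq b * Aq b)
     = (\<Sum>i\<in>I. \<Sum>x\<in>K. \<Sum>j\<in>I. \<Sum>y\<in>K. \<mu> x * \<mu> y * measure_pmf.expectation Pm (\<lambda>b. Z (b i) x * Z (b j) y))"
    unfolding eq by (simp add: Esum Emult2)
  also have "\<dots> = (\<Sum>i\<in>I. \<Sum>j\<in>I. \<Sum>x\<in>K. \<Sum>y\<in>K. \<mu> x * \<mu> y * measure_pmf.expectation Pm (\<lambda>b. Z (b i) x * Z (b j) y))"
    by (intro sum.cong refl sum.swap)
  also have "\<dots> = (\<Sum>i\<in>I. \<Sum>j\<in>I. if i = j then W else 0)"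
    by (intro sum.cong refl) (auto simp: M2 W_def)
  also have "\<dots> = real (card I) * W" using finI by (simp add: sum.delta)
  finally show ?thesis .
qed

lemma EAQ: "measure_pmf.expectation Pm (\<lambda>b. Aq b * Qq b) = 0"
proof -
  have eq: "(\<lambda>b. Aq b * Qq b) = (\<lambda>b. \<Sum>i\<in>I. \<Sum>y\<in>K. \<Sum>j\<in>I. \<Sum>l\<in>I-{j}. \<Sum>x\<in>K. (\<mu> y * Z (b i) y) * (Z (b j) x * Z (b l) x))"
  proof
    fix b
    have "Aq b * Qq b = (\<Sum>i\<in>I. \<Sum>y\<in>K. (\<mu> y * Z (b i) y) * Qq b)"
      by (simp add: Aq_def sum_distrib_right)
    also have "\<dots> = (\<Sum>i\<in>I. \<Sum>y\<in>K. \<Sum>j\<in>I. \<Sum>l\<in>I-{j}. \<Sum>x\<in>K. (\<mu> y * Z (b i) y) * (Z (b j) x * Z (b l) x))"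
      by (simp add: Qq_def sum_distrib_left)
    finally show "Aq b * Qq b = \<dots>" .
  qed
  have "measure_pmf.expectation Pm (\<lambda>b. Aq b * Qq b)
     = (\<Sum>i\<in>I. \<Sum>y\<in>K. \<Sum>j\<in>I. \<Sum>l\<in>I-{j}. \<Sum>x\<in>K. \<mu> y * measure_pmf.expectation Pm (\<lambda>b. Z (b i) y * (Z (b j) x * Z (b l) x)))"
    unfolding eq by (simp add: Esum Emult1)
  also have "\<dots> = 0"
    by (intro sum.neutral ballI) (auto simp: M3)
  finally show ?thesis .
qed

lemma EQQ: "measure_pmf.expectation Pm (\<lambda>b. Qq b * Qq b) = 2 * real (card I) * (real (card I) - 1) * V"
proof -
  have eq: "(\<lambda>b. Qq b * Qq b) = (\<lambda>b. \<Sum>i\<in>I. \<Sum>j\<in>I-{i}. \<Sum>x\<in>K. \<Sum>k\<in>I. \<Sum>l\<in>I-{k}. \<Sum>y\<in>K.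
        (Z (b i) x * Z (b j) x) * (Z (b k) y * Z (b l) y))"
  proof
    fix b
    have "Qq b * Qq b = (\<Sum>i\<in>I. \<Sum>j\<in>I-{i}. \<Sum>x\<in>K. (Z (b i) x * Z (b j) x) * Qq b)"
      by (subst (1) Qq_def) (simp add: sum_distrib_right)
    also have "\<dots> = (\<Sum>i\<in>I. \<Sum>j\<in>I-{i}. \<Sum>x\<in>K. \<Sum>k\<in>I. \<Sum>l\<in>I-{k}. \<Sum>y\<in>K.
        (Z (b i) x * Z (b j) x) * (Z (b k) y * Z (b l) y))"
      by (simp add: Qq_def sum_distrib_left)
    finally show "Qq b * Qq b = \<dots>" .
  qed
  have "measure_pmf.expectation Pm (\<lambda>b. Qq b * Qq b)
     = (\<Sum>i\<in>I. \<Sum>j\<in>I-{i}. \<Sum>x\<in>K. \<Sum>k\<in>I. \<Sum>l\<in>I-{k}. \<Sum>y\<in>K.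
        measure_pmf.expectation Pm (\<lambda>b. (Z (b i) x * Z (b j) x) * (Z (b k) y * Z (b l) y)))"
    unfolding eq by (simp add: Esum)
  also have "\<dots> = (\<Sum>i\<in>I. \<Sum>j\<in>I-{i}. \<Sum>x\<in>K. \<Sum>k\<in>I. \<Sum>l\<in>I-{k}. \<Sum>y\<in>K.
        if (k = i \<and> l = j) \<or> (k = j \<and> l = i) then (Cm x y)^2 else 0)"
    by (intro sum.cong refl) (auto simp: M4)
  also have "\<dots> = (\<Sum>i\<in>I. \<Sum>j\<in>I-{i}. \<Sum>x\<in>K. 2 * (\<Sum>y\<in>K. (Cm x y)^2))"
    by (intro sum.cong refl count2) auto
  also have "\<dots> = (\<Sum>i\<in>I. \<Sum>j\<in>I-{i}. 2 * V)"
    by (simp add: V_def sum_distrib_left)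
  also have "\<dots> = (\<Sum>i\<in>I. (real (card I) - 1) * (2 * V))"
    using cI by (intro sum.cong refl) simp
  also have "\<dots> = 2 * real (card I) * (real (card I) - 1) * V" by simp
  finally show ?thesis .
qed

lemma ER2:
  "measure_pmf.expectation Pm (\<lambda>b. (c * Aq b + Qq b)^2)
     = c^2 * real (card I) * W + 2 * real (card I) * (real (card I) - 1) * V"
proof -
  have "(\<lambda>b. (c * Aq b + Qq b)^2) = (\<lambda>b. c^2 * (Aq b * Aq b) + ((2*c) * (Aq b * Qq b) + Qq b * Qq b))"
    by (auto simp: fun_eq_iff power2_eq_square algebra_simps)
  then show ?thesis by (simp add: Eadd EAA EAQ EQQ)
qed

lemma ER: "measure_pmf.expectation Pm (\<lambda>b. c * Aq b + Qq b) = 0"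
  by (simp add: Eadd EA EQ)

lemma gen_ER2: "measure_pmf.expectation (Pi_pmf I dflt (\<lambda>_. D))
   (\<lambda>b. (c * (\<Sum>i\<in>I. \<Sum>x\<in>K. \<mu> x * Z (b i) x) + (\<Sum>i\<in>I. \<Sum>j\<in>I-{i}. \<Sum>x\<in>K. Z (b i) x * Z (b j) x))^2)
  = c^2 * real (card I) * (\<Sum>x\<in>K. \<Sum>y\<in>K. \<mu> x * \<mu> y * measure_pmf.expectation D (\<lambda>u. Z u x * Z u y))
    + 2 * real (card I) * (real (card I) - 1) * (\<Sum>x\<in>K. \<Sum>y\<in>K. (measure_pmf.expectation D (\<lambda>u. Z u x * Z u y))^2)"
  using ER2 by (simp only: Pm_def Aq_def Qq_def W_def V_def Cm_def)

lemma gen_ER: "measure_pmf.expectation (Pi_pmf I dflt (\<lambda>_. D))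
   (\<lambda>b. c * (\<Sum>i\<in>I. \<Sum>x\<in>K. \<mu> x * Z (b i) x) + (\<Sum>i\<in>I. \<Sum>j\<in>I-{i}. \<Sum>x\<in>K. Z (b i) x * Z (b j) x)) = 0"
  using ER by (simp only: Pm_def Aq_def Qq_def)

end

end

lemma Pi_comp:
  fixes f :: "'b \<Rightarrow> real"
  assumes fin: "finite A" "\<And>i. i \<in> A \<Longrightarrow> finite (set_pmf (P i))" and a: "a \<in> A"
  shows "measure_pmf.expectation (Pi_pmf A d P) (\<lambda>b. f (b a)) = measure_pmf.expectation (P a) f"
  using Pi_indep[OF assms, where F="\<lambda>_. 1" and f=f] by simp

lemma beta_alpha:
  assumes "\<epsilon> > 0"
  shows "0 < beta_R \<epsilon>" "beta_R \<epsilon> < 1/2" "alpha_R \<epsilon> = 1 - 2 * beta_R \<epsilon>"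
    "0 \<le> alpha_R \<epsilon>" "alpha_R \<epsilon> \<le> 1"
proof -
  have e: "exp (\<epsilon>/2) > 1" using assms by simp
  show "0 < beta_R \<epsilon>" unfolding beta_R_def by (simp add: add_pos_pos)
  have e2: "exp (\<epsilon>/2) + 1 > 2" using e by simp
  have e3: "exp (\<epsilon>/2) + 1 > 0" using exp_gt_zero[of "\<epsilon>/2"] by linarith
  show "beta_R \<epsilon> < 1/2" unfolding beta_R_def using e2 e3 by (simp add: divide_less_eq)
  have e4: "exp (\<epsilon>/2) + 1 \<noteq> 0" using exp_gt_zero[of "\<epsilon>/2"] by linarith
  show ab: "alpha_R \<epsilon> = 1 - 2 * beta_R \<epsilon>" unfolding beta_R_def alpha_R_def
    using e4 by (simp add: field_simps)
  show "0 \<le> alpha_R \<epsilon>" unfolding alpha_R_def using e by simp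
  show "alpha_R \<epsilon> \<le> 1" unfolding alpha_R_def using e3 by (simp add: divide_le_eq)
qed

lemma rappor_fin: "finite (set_pmf (rappor \<epsilon> k z))"
  unfolding rappor_def by (intro fin_Pi) auto

lemma rappor_E1:
  assumes "\<epsilon> > 0" "x \<in> {1..k}"
  shows "measure_pmf.expectation (rappor \<epsilon> k z) (\<lambda>u. if u x then 1 else 0)
       = (if x = z then 1 - beta_R \<epsilon> else beta_R \<epsilon>)"
proof -
  have b: "0 \<le> beta_R \<epsilon>" "beta_R \<epsilon> \<le> 1" using beta_alpha[OF assms(1)] by auto
  show ?thesis unfolding rappor_def
    by (subst Pi_comp[where f = "\<lambda>v. if v then 1 else 0"]) (use assms b in auto)
qed

lemma rappor_E2:
  assumes "\<epsilon> > 0" "x \<in> {1..k}" "y \<in> {1..k}" "x \<noteq> y"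
  shows "measure_pmf.expectation (rappor \<epsilon> k z) (\<lambda>u. (if u x then 1 else 0) * (if u y then 1 else 0))
       = (if x = z then 1 - beta_R \<epsilon> else beta_R \<epsilon>) * (if y = z then 1 - beta_R \<epsilon> else beta_R \<epsilon>)"
proof -
  have b: "0 \<le> beta_R \<epsilon>" "beta_R \<epsilon> \<le> 1" using beta_alpha[OF assms(1)] by auto
  have "measure_pmf.expectation (rappor \<epsilon> k z) (\<lambda>u. (if u x then 1 else 0) * (if u y then 1 else (0::real)))
      = measure_pmf.expectation (map_pmf (\<lambda>flip. (x = z) \<noteq> flip) (bernoulli_pmf (beta_R \<epsilon>))) (\<lambda>v. if v then 1 else 0) *
        measure_pmf.expectation (rappor \<epsilon> k z) (\<lambda>u. if u y then 1 else 0)"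
    unfolding rappor_def
    by (rule Pi_indep[where P = "\<lambda>y. map_pmf (\<lambda>flip. (y = z) \<noteq> flip) (bernoulli_pmf (beta_R \<epsilon>))" and a = x and f = "\<lambda>v. if v then 1 else 0" and F = "\<lambda>u. if u y then 1 else 0"])
       (use assms in auto)
  also have "\<dots> = (if x = z then 1 - beta_R \<epsilon> else beta_R \<epsilon>) * (if y = z then 1 - beta_R \<epsilon> else beta_R \<epsilon>)"
    using assms b by (simp add: rappor_E1)
  finally show ?thesis .
qed

lemma pair_sum:
  fixes f :: "'a \<Rightarrow> real"
  assumes "finite I"
  shows "(\<Sum>i\<in>I. \<Sum>j\<in>I-{i}. f i * f j) = (\<Sum>i\<in>I. f i)^2 - (\<Sum>i\<in>I. (f i)^2)"
proof -
  have "(\<Sum>i\<in>I. \<Sum>j\<in>I-{i}. f i * f j) = (\<Sum>i\<in>I. f i * ((\<Sum>j\<in>I. f j) - f i))"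
    using assms by (intro sum.cong refl) (simp add: sum_distrib_left[symmetric] sum_diff1)
  also have "\<dots> = (\<Sum>i\<in>I. f i)^2 - (\<Sum>i\<in>I. (f i)^2)"
    by (simp add: algebra_simps sum_subtractf sum_distrib_right[symmetric] power2_eq_square)
  finally show ?thesis .
qed

lemma T_point:
  fixes d :: "'a \<Rightarrow> real"
  assumes fin: "finite I" and dd: "\<And>i. i \<in> I \<Longrightarrow> d i * d i = d i"
  shows "((\<Sum>i\<in>I. d i) - (real (card I) - 1) * l)^2 - (\<Sum>i\<in>I. d i) + (real (card I) - 1) * l^2
     = 2 * (real (card I) - 1) * (q - l) * (\<Sum>i\<in>I. (d i - q))
       + (\<Sum>i\<in>I. \<Sum>j\<in>I-{i}. (d i - q) * (d j - q))
       + real (card I) * (real (card I) - 1) * (q - l)^2"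
proof -
  define N where "N = (\<Sum>i\<in>I. d i)"
  define m where "m = real (card I)"
  have s1: "(\<Sum>i\<in>I. (d i - q)) = N - m * q"
    by (simp add: N_def m_def sum_subtractf)
  have "(\<Sum>i\<in>I. (d i - q)^2) = (\<Sum>i\<in>I. d i - 2 * q * d i + q^2)"
    using dd by (intro sum.cong refl) (simp add: power2_eq_square algebra_simps)
  also have "\<dots> = N - 2 * q * N + m * q^2"
    by (simp add: N_def m_def sum.distrib sum_subtractf sum_distrib_left)
  finally have s2: "(\<Sum>i\<in>I. (d i - q)^2) = N - 2 * q * N + m * q^2" .
  have s3: "(\<Sum>i\<in>I. \<Sum>j\<in>I-{i}. (d i - q) * (d j - q)) = (N - m * q)^2 - (N - 2 * q * N + m * q^2)"
    using pair_sum[OF fin, of "\<lambda>i. d i - q"] s1 s2 by simp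
  show ?thesis
    unfolding s1 s3 N_def[symmetric] m_def[symmetric]
    by (simp add: power2_eq_square algebra_simps)
qed

lemma card_filter_sum:
  assumes "finite I"
  shows "real (card {j \<in> I. P j}) = (\<Sum>j\<in>I. if P j then 1 else 0)"
  using assms by (simp add: sum.inter_filter[symmetric])

lemma T_form:
  fixes q :: "nat \<Rightarrow> real"
  shows "T_stat \<epsilon> k n b =
     2 * (real n - 1) * (\<Sum>i\<in>{1..n}. \<Sum>x\<in>{1..k}. (q x - lam_R \<epsilon> k) * ((if b i x then 1 else 0) - q x))
     + (\<Sum>i\<in>{1..n}. \<Sum>j\<in>{1..n}-{i}. \<Sum>x\<in>{1..k}. ((if b i x then 1 else 0) - q x) * ((if b j x then 1 else 0) - q x))
     + real n * (real n - 1) * (\<Sum>x\<in>{1..k}. (q x - lam_R \<epsilon> k)^2)"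
proof -
  define l where "l = lam_R \<epsilon> k"
  have Nc: "N_count n b x = (\<Sum>i\<in>{1..n}. if b i x then 1 else 0)" for x
    unfolding N_count_def by (rule card_filter_sum) simp
  have "T_stat \<epsilon> k n b = (\<Sum>x\<in>{1..k}. (N_count n b x - (real n - 1) * l)^2 - N_count n b x + (real n - 1) * l^2)"
    unfolding T_stat_def l_def by (simp add: sum.distrib)
  also have "\<dots> = (\<Sum>x\<in>{1..k}.
        2 * (real n - 1) * (q x - l) * (\<Sum>i\<in>{1..n}. ((if b i x then 1 else 0) - q x))
       + (\<Sum>i\<in>{1..n}. \<Sum>j\<in>{1..n}-{i}. ((if b i x then 1 else 0) - q x) * ((if b j x then 1 else 0) - q x))
       + real n * (real n - 1) * (q x - l)^2)"
  proof (intro sum.cong refl)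
    fix x
    show "(N_count n b x - (real n - 1) * l)\<^sup>2 - N_count n b x + (real n - 1) * l\<^sup>2 = 
        2 * (real n - 1) * (q x - l) * (\<Sum>i\<in>{1..n}. ((if b i x then 1 else 0) - q x))
       + (\<Sum>i\<in>{1..n}. \<Sum>j\<in>{1..n}-{i}. ((if b i x then 1 else 0) - q x) * ((if b j x then 1 else 0) - q x))
       + real n * (real n - 1) * (q x - l)^2"
      unfolding Nc using T_point[of "{1..n}" "\<lambda>i. if b i x then 1 else 0" l "q x"] by simp
  qed
  also have "\<dots> = 2 * (real n - 1) * (\<Sum>i\<in>{1..n}. \<Sum>x\<in>{1..k}. (q x - l) * ((if b i x then 1 else 0) - q x))
     + (\<Sum>i\<in>{1..n}. \<Sum>j\<in>{1..n}-{i}. \<Sum>x\<in>{1..k}. ((if b i x then 1 else 0) - q x) * ((if b j x then 1 else 0) - q x))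
     + real n * (real n - 1) * (\<Sum>x\<in>{1..k}. (q x - l)^2)"
  proof -
    have a: "(\<Sum>x\<in>{1..k}. 2 * (real n - 1) * (q x - l) * (\<Sum>i\<in>{1..n}. ((if b i x then 1 else 0) - q x)))
       = 2 * (real n - 1) * (\<Sum>i\<in>{1..n}. \<Sum>x\<in>{1..k}. (q x - l) * ((if b i x then 1 else 0) - q x))"
      by (simp only: sum_distrib_left mult.assoc) (rule sum.swap)
    have b: "(\<Sum>x\<in>{1..k}. \<Sum>i\<in>{1..n}. \<Sum>j\<in>{1..n}-{i}. ((if b i x then 1 else 0) - q x) * ((if b j x then 1 else 0) - q x))
       = (\<Sum>i\<in>{1..n}. \<Sum>j\<in>{1..n}-{i}. \<Sum>x\<in>{1..k}. ((if b i x then 1 else 0) - q x) * ((if b j x then 1 else 0) - q x))"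
      by (subst sum.swap) (rule sum.cong[OF refl], rule sum.swap)
    show ?thesis
      by (simp only: sum.distrib a b) (simp add: sum_distrib_left)
  qed
  finally show ?thesis unfolding l_def .
qed

theorem lemma3p3:
  fixes \<epsilon> :: real and k n :: nat and p :: "nat pmf"
  assumes "\<epsilon> > 0" and "k \<ge> 1" and "set_pmf p \<subseteq> {1..k}"
  shows "measure_pmf.variance (rappor_outputs \<epsilon> k n p) (T_stat \<epsilon> k n)
           \<le> 4 * real k * (real n)^2
             + 8 * (real n)^3 * (alpha_R \<epsilon>)^2 * (\<Sum>x\<in>{1..k}. (pmf p x - 1 / real k)^2)"
proof -
  define \<beta> where "\<beta> = beta_R \<epsilon>"
  define \<alpha> where "\<alpha> = alpha_R \<epsilon>"
  define K where "K = {1..k}"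
  define I where "I = {1..n}"
  define D where "D = bind_pmf p (rappor \<epsilon> k)"
  define q where "q x = measure_pmf.expectation D (\<lambda>u. if u x then 1 else (0::real))" for x
  define Z where "Z u x = (if u x then 1 else 0) - q x" for u :: "nat \<Rightarrow> bool" and x
  define \<mu> where "\<mu> x = q x - lam_R \<epsilon> k" for x
  define c where "c = 2 * (real n - 1)"
  have ba: "0 < \<beta>" "\<beta> < 1/2" "\<alpha> = 1 - 2*\<beta>" "0 \<le> \<alpha>" "\<alpha> \<le> 1"
    using beta_alpha[OF assms(1)] by (auto simp: \<alpha>_def \<beta>_def)
  have finK: "finite K" by (simp add: K_def)
  have finI: "finite I" by (simp add: I_def)
  have pK: "set_pmf p \<subseteq> K" using assms(3) by (simp add: K_def)
  have finD: "finite (set_pmf D)"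
    unfolding D_def set_bind_pmf by (intro finite_UN_I finite_subset[OF pK finK] rappor_fin)
  have intD: "integrable (measure_pmf D) (f :: _ \<Rightarrow> real)" for f
    using integrable_measure_pmf_finite[OF finD] by blast
  have Z0: "measure_pmf.expectation D (\<lambda>u. Z u x) = 0" for x
    unfolding Z_def q_def by (simp add: intD)
  have ED: "measure_pmf.expectation D h = (\<Sum>z\<in>K. pmf p z * measure_pmf.expectation (rappor \<epsilon> k z) h)"
    for h :: "_ \<Rightarrow> real"
    unfolding D_def by (subst pmf_expectation_bind[of K]) (use finK pK rappor_fin in auto)
  have sp: "(\<Sum>z\<in>K. pmf p z) = 1" using sum_pmf_eq_1[OF finK pK] .
  have qv: "q x = \<beta> + \<alpha> * pmf p x" if x: "x \<in> K" for x
  proof -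
    have "q x = (\<Sum>z\<in>K. pmf p z * (if x = z then 1 - \<beta> else \<beta>))"
      unfolding q_def ED using x assms(1) by (intro sum.cong refl) (auto simp: K_def rappor_E1 \<beta>_def)
    also have "\<dots> = (\<Sum>z\<in>K. pmf p z * \<beta> + (if z = x then \<alpha> * pmf p z else 0))"
      by (intro sum.cong refl) (auto simp: ba(3) algebra_simps)
    also have "\<dots> = \<beta> + \<alpha> * pmf p x"
      using sp x finK by (simp add: sum.distrib sum_distrib_right[symmetric] sum.delta)
    finally show ?thesis .
  qed
  have E2: "measure_pmf.expectation D (\<lambda>u. (if u x then 1 else 0) * (if u y then 1 else 0))
      = \<beta>^2 + \<alpha> * \<beta> * (pmf p x + pmf p y)" if xy: "x \<in> K" "y \<in> K" "x \<noteq> y" for x y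
  proof -
    have "measure_pmf.expectation D (\<lambda>u. (if u x then 1 else 0) * (if u y then 1 else 0))
       = (\<Sum>z\<in>K. pmf p z * ((if x = z then 1 - \<beta> else \<beta>) * (if y = z then 1 - \<beta> else \<beta>)))"
      unfolding ED using xy assms(1) by (intro sum.cong refl) (auto simp: K_def rappor_E2 \<beta>_def)
    also have "\<dots> = (\<Sum>z\<in>K. pmf p z * \<beta>^2 + (if z = x then \<alpha> * \<beta> * pmf p z else 0)
                       + (if z = y then \<alpha> * \<beta> * pmf p z else 0))"
      using xy by (intro sum.cong refl) (auto simp: ba(3) algebra_simps power2_eq_square)
    also have "\<dots> = \<beta>^2 + \<alpha> * \<beta> * (pmf p x + pmf p y)"
      using sp xy finK by (simp add: sum.distrib sum_distrib_right[symmetric] sum.delta algebra_simps)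
    finally show ?thesis .
  qed
  have Cm: "measure_pmf.expectation D (\<lambda>u. Z u x * Z u y)
      = (if x = y then q x - (q x)^2 else - (\<alpha>^2 * pmf p x * pmf p y))" if xy: "x \<in> K" "y \<in> K" for x y
  proof -
    have "(\<lambda>u. Z u x * Z u y) = (\<lambda>u. (if u x then 1 else 0) * (if u y then 1 else 0)
        + (- q y) * (if u x then 1 else 0) + (- q x) * (if u y then 1 else 0) + q x * q y)"
      by (auto simp: Z_def fun_eq_iff algebra_simps)
    then have e: "measure_pmf.expectation D (\<lambda>u. Z u x * Z u y)
        = measure_pmf.expectation D (\<lambda>u. (if u x then 1 else 0) * (if u y then 1 else 0)) - q x * q y"
      by (simp add: intD q_def[symmetric])
    show ?thesis
    proof (cases "x = y")
      case True
      have "(\<lambda>u. (if u x then 1 else 0) * (if u x then 1 else (0::real))) = (\<lambda>u. if u x then 1 else 0)"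
        by auto
      then show ?thesis using e True by (simp add: q_def[symmetric] power2_eq_square)
    next
      case False
      then show ?thesis using e E2[OF xy False] qv[OF xy(1)] qv[OF xy(2)]
        by (simp add: power2_eq_square algebra_simps)
    qed
  qed
  define R where "R b = c * (\<Sum>i\<in>I. \<Sum>x\<in>K. \<mu> x * Z (b i) x) + (\<Sum>i\<in>I. \<Sum>j\<in>I-{i}. \<Sum>x\<in>K. Z (b i) x * Z (b j) x)" for b
  define Cc where "Cc = real n * (real n - 1) * (\<Sum>x\<in>K. (\<mu> x)^2)"
  have Tf: "T_stat \<epsilon> k n = (\<lambda>b. R b + Cc)"
    unfolding R_def Cc_def \<mu>_def Z_def c_def I_def K_def by (rule ext) (rule T_form)
  define M where "M = Pi_pmf I (\<lambda>_. False) (\<lambda>_. D)"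
  have Meq: "rappor_outputs \<epsilon> k n p = M" unfolding rappor_outputs_def I_def D_def M_def ..
  have ER: "measure_pmf.expectation M R = 0"
    unfolding R_def M_def by (rule gen_ER[OF finI finD Z0 finK])
  define W where "W = (\<Sum>x\<in>K. \<Sum>y\<in>K. \<mu> x * \<mu> y * measure_pmf.expectation D (\<lambda>u. Z u x * Z u y))"
  define V where "V = (\<Sum>x\<in>K. \<Sum>y\<in>K. (measure_pmf.expectation D (\<lambda>u. Z u x * Z u y))^2)"
  have ER2: "measure_pmf.expectation M (\<lambda>b. (R b)^2) = c^2 * real (card I) * W + 2 * real (card I) * (real (card I) - 1) * V"
    unfolding R_def M_def W_def V_def by (rule gen_ER2[OF finI finD Z0 finK])
  have finM: "finite (set_pmf M)" unfolding M_def using finI finD by (intro fin_Pi) auto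
  have intM: "integrable (measure_pmf M) (f :: _ \<Rightarrow> real)" for f
    using integrable_measure_pmf_finite[OF finM] by blast
  have var: "measure_pmf.variance (rappor_outputs \<epsilon> k n p) (T_stat \<epsilon> k n) = measure_pmf.expectation M (\<lambda>b. (R b)^2)"
  proof -
    have "measure_pmf.expectation M (\<lambda>b. R b + Cc) = Cc" using ER by (simp add: intM)
    then show ?thesis unfolding Meq Tf by simp
  qed
  have cardI: "card I = n" by (simp add: I_def)
  have pb: "0 \<le> pmf p x" "pmf p x \<le> 1" for x by (simp_all add: pmf_le_1)
  have qb: "0 \<le> q x" "q x \<le> 1" if "x \<in> K" for x
  proof -
    have "\<alpha> * pmf p x \<le> \<alpha>" using ba pb[of x] by (simp add: mult_left_le)
    moreover have "0 \<le> \<alpha> * pmf p x" using ba pb[of x] by simp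
    ultimately show "0 \<le> q x" "q x \<le> 1" using qv[OF that] ba(1,3) by linarith+
  qed
  define S where "S = (\<Sum>x\<in>K. (\<mu> x)^2)"
  have S0: "0 \<le> S" unfolding S_def by (simp add: sum_nonneg)
  have Wb: "W \<le> 2 * S"
  proof -
    define d where "d x = q x - (q x)^2 + \<alpha>^2 * (pmf p x)^2" for x
    define a where "a x = \<mu> x * pmf p x" for x
    have "W = (\<Sum>x\<in>K. \<Sum>y\<in>K. (if x = y then \<mu> x * \<mu> y * d x else 0) - \<alpha>^2 * (a x * a y))"
      unfolding W_def by (intro sum.cong refl) (auto simp: Cm d_def a_def algebra_simps power2_eq_square)
    also have "\<dots> = (\<Sum>x\<in>K. (\<mu> x)^2 * d x) - \<alpha>^2 * (\<Sum>x\<in>K. a x)^2"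
    proof -
      have aux: "(\<Sum>x\<in>K. \<Sum>y\<in>K. \<alpha>^2 * (a x * a y)) = \<alpha>^2 * (\<Sum>x\<in>K. a x)^2"
      proof -
        have "(\<Sum>x\<in>K. a x)^2 = (\<Sum>x\<in>K. \<Sum>y\<in>K. a x * a y)"
          by (simp add: power2_eq_square sum_product)
        then show ?thesis by (simp add: sum_distrib_left)
      qed
      have aux2: "(\<Sum>y\<in>K. if x = y then \<mu> x * \<mu> y * d x else 0) = (\<mu> x)^2 * d x" if "x \<in> K" for x
        using finK that by (simp add: power2_eq_square)
      show ?thesis using finK aux aux2 by (simp add: sum_subtractf power2_eq_square)
    qed
    also have "\<dots> \<le> (\<Sum>x\<in>K. (\<mu> x)^2 * d x)" by simp
    also have "\<dots> \<le> (\<Sum>x\<in>K. (\<mu> x)^2 * 2)"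
    proof (intro sum_mono mult_left_mono)
      fix x assume x: "x \<in> K"
      have "0 \<le> (q x)^2" by simp
      then have "q x - (q x)^2 \<le> 1" using qb[OF x] by linarith
      moreover have "\<alpha>^2 * (pmf p x)^2 \<le> 1"
        using ba pb[of x] by (intro mult_le_one power_le_one) auto
      ultimately show "d x \<le> 2" unfolding d_def by linarith
    qed simp
    also have "\<dots> = 2 * S" by (simp add: S_def sum_distrib_left mult.commute)
    finally show ?thesis .
  qed
  have Vb: "V \<le> 2 * real k"
  proof -
    have "V \<le> (\<Sum>x\<in>K. \<Sum>y\<in>K. (if x = y then 1 else 0) + pmf p x * pmf p y)"
      unfolding V_def
    proof (intro sum_mono)
      fix x y assume x: "x \<in> K" and y: "y \<in> K"
      show "(measure_pmf.expectation D (\<lambda>u. Z u x * Z u y))^2 \<le> (if x = y then 1 else 0) + pmf p x * pmf p y"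
      proof (cases "x = y")
        case True
        have q2: "(q x)^2 \<le> q x" using qb[OF x] by (simp add: power2_eq_square mult_left_le)
        have "0 \<le> (q x)^2" by simp
        then have "0 \<le> q x - (q x)^2" "q x - (q x)^2 \<le> 1" using qb[OF x] q2 by linarith+
        then have "(q x - (q x)^2)^2 \<le> 1" by (simp add: power_le_one)
        moreover have "0 \<le> pmf p x * pmf p y" by simp
        moreover have "(measure_pmf.expectation D (\<lambda>u. Z u x * Z u y))^2 = (q x - (q x)^2)^2"
          using True Cm[OF x y] by simp
        moreover have "(if x = y then 1 else 0) = (1::real)" using True by simp
        ultimately show ?thesis by linarith
      next
        case False
        have pp: "0 \<le> pmf p x * pmf p y" "pmf p x * pmf p y \<le> 1"
          using pb[of x] pb[of y] by (simp_all add: mult_le_one)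
        have "(- (\<alpha>^2 * pmf p x * pmf p y))^2 = \<alpha>^4 * (pmf p x * pmf p y)^2"
          by (simp add: power2_eq_square power4_eq_xxxx algebra_simps)
        also have "\<dots> \<le> 1 * (pmf p x * pmf p y)"
        proof (rule mult_mono)
          show "\<alpha>^4 \<le> 1" using ba by (simp add: power_le_one)
          show "(pmf p x * pmf p y)^2 \<le> pmf p x * pmf p y" using pp
            by (simp add: power2_eq_square mult_left_le)
        qed (use pp in auto)
        finally show ?thesis using False Cm[OF x y] by simp
      qed
    qed
    also have "\<dots> = real (card K) + (\<Sum>x\<in>K. pmf p x) * (\<Sum>y\<in>K. pmf p y)"
      using finK by (simp add: sum.distrib sum.delta sum_product)
    also have "\<dots> = real k + 1" using sp by (simp add: K_def)
    also have "\<dots> \<le> 2 * real k" using assms(2) by simp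
    finally show ?thesis .
  qed
  have \<mu>v: "\<mu> x = \<alpha> * (pmf p x - 1 / real k)" if "x \<in> K" for x
    using qv[OF that] by (simp add: \<mu>_def lam_R_def \<alpha>_def \<beta>_def algebra_simps)
  have Sv: "S = \<alpha>^2 * (\<Sum>x\<in>{1..k}. (pmf p x - 1 / real k)^2)"
    unfolding S_def K_def[symmetric] by (simp add: \<mu>v power_mult_distrib sum_distrib_left)
  have nn: "0 \<le> real n * (real n - 1)" by (cases n) auto
  have main: "c^2 * real n * W + 2 * real n * (real n - 1) * V \<le> c^2 * real n * (2 * S) + 2 * real n * (real n - 1) * (2 * real k)"
  proof (rule add_mono)
    show "c^2 * real n * W \<le> c^2 * real n * (2 * S)" using Wb by (intro mult_left_mono) auto
    show "2 * real n * (real n - 1) * V \<le> 2 * real n * (real n - 1) * (2 * real k)"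
      using Vb nn by (intro mult_left_mono) auto
  qed
  have h3: "c^2 * real n * (2 * S) \<le> 8 * (real n)^3 * S"
  proof (cases "n = 0")
    case True then show ?thesis by simp
  next
    case False
    then have "real n \<ge> 1" by simp
    then have "(real n - 1)^2 \<le> (real n)^2" by (intro power_mono) auto
    then have "(real n - 1)^2 * real n \<le> (real n)^2 * real n" by (intro mult_right_mono) auto
    then have "8 * ((real n - 1)^2 * real n) * S \<le> 8 * ((real n)^2 * real n) * S"
      using S0 by (intro mult_right_mono) auto
    then show ?thesis by (simp add: c_def power2_eq_square power3_eq_cube algebra_simps)
  qed
  have h4: "2 * real n * (real n - 1) * (2 * real k) \<le> 4 * real k * (real n)^2"
  proof -
    have "2 * real n * (real n - 1) * (2 * real k) = 4 * real k * (real n)^2 - 4 * real k * real n"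
      by (simp add: power2_eq_square algebra_simps)
    then show ?thesis by simp
  qed
  have "measure_pmf.variance (rappor_outputs \<epsilon> k n p) (T_stat \<epsilon> k n)
      = c^2 * real n * W + 2 * real n * (real n - 1) * V"
    unfolding var ER2 cardI ..
  also have "\<dots> \<le> c^2 * real n * (2 * S) + 2 * real n * (real n - 1) * (2 * real k)" by (rule main)
  also have "\<dots> \<le> 8 * (real n)^3 * S + 4 * real k * (real n)^2" using h3 h4 by linarith
  also have "\<dots> = 4 * real k * (real n)^2
             + 8 * (real n)^3 * (alpha_R \<epsilon>)^2 * (\<Sum>x\<in>{1..k}. (pmf p x - 1 / real k)^2)"
    unfolding Sv \<alpha>_def by (simp add: algebra_simps)
  finally show ?thesis .
qed

end
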